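(* Let $P\subset\mathbb{R}^2$ be any set with $0\in P$ such that the contingent cone $T_P(0)$ contains neither $(1,\tfrac12)$ nor $(1,-\tfrac12)$. For $p\in P$, $x\in\mathbb{R}^2$, $y\in\mathbb{R}^2$ let $G(p,x,y):=(x_1-p_1-\tfrac12y_1-\tfrac12y_2,\ -x_2-p_2+y_1-y_2)$, $\varphi_1(x):=-\tfrac12x_1+x_2$, $\varphi_2(x):=-\tfrac12x_1-x_2$, and consider the KKT system (for minimizing $\tfrac12x_1^2-\tfrac12x_2^2-\langle p,x\rangle$ subject to $\varphi_1(x)\le0,\varphi_2(x)\le0$) $$g(p,x,y):=(G(p,x,y),(\varphi(x),y))\in C:=\{0_{\mathbb{R}^2}\}\times\operatorname{gph}N_{\mathbb{R}^2_-},$$ with solution map $\Gamma(p):=\{(x,y): g(p,x,y)\in C\}$. Then this system enjoys Robinson stability at $(\bar p,\bar x,\bar y)=(0,0,0)$, and $\Gamma:P\rightrightarrows\mathbb{R}^2\times\mathbb{R}^2$ is Lipschitz-like around $(0,(0,0))$.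
   Context: $\operatorname{gph}N_{\mathbb{R}^2_-}=\{(a,y)\in\mathbb{R}^2\times\mathbb{R}^2: a\le0,\ y\ge0,\ a_iy_i=0,\ i=1,2\}$. Contingent cone $T_P(0)=\{w:\exists t_k\downarrow0,w_k\to w,\ t_kw_k\in P\}$. Robinson stability at $(0,\xi_0)$: there exist $\kappa\ge0$ and neighborhoods $V$ of $0$ in $P$, $U$ of $\xi_0$ with $\operatorname{dist}(\xi;\Gamma(p))\le\kappa\operatorname{dist}(g(p,\xi);C)$ for $(p,\xi)\in V\times U$. Lipschitz-like: there exist $\ell\ge0$ and neighborhoods $V$ of $0$ in $P$, $U$ of $(0,0)$ with $\Gamma(p)\cap U\subset\Gamma(p')+\ell\|p-p'\|\mathbb{B}$ for all $p,p'\in V$. *)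

theory Defs
  imports "HOL-Analysis.Analysis"
begin

text \<open>R^2 is modelled as real \<times> real (product norm = Euclidean norm).\<close>

definition contingent_cone :: "(real \<times> real) set \<Rightarrow> real \<times> real \<Rightarrow> (real \<times> real) set" where
  "contingent_cone P x = {w. \<exists>t wk. (\<forall>k. t k > 0) \<and> decseq t \<and> t \<longlonglongrightarrow> 0 \<and>
       wk \<longlonglongrightarrow> w \<and> (\<forall>k. x + t k *\<^sub>R wk k \<in> P)}"

definition gph_N_orthant :: "((real \<times> real) \<times> (real \<times> real)) set" where
  "gph_N_orthant = {(a, y). fst a \<le> 0 \<and> snd a \<le> 0 \<and> fst y \<ge> 0 \<and> snd y \<ge> 0 \<and>
       fst a * fst y = 0 \<and> snd a * snd y = 0}"

definition C_set :: "((real \<times> real) \<times> ((real \<times> real) \<times> (real \<times> real))) set" where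
  "C_set = {(0::real \<times> real)} \<times> gph_N_orthant"

definition G_map :: "real \<times> real \<Rightarrow> real \<times> real \<Rightarrow> real \<times> real \<Rightarrow> real \<times> real" where
  "G_map p x y = (fst x - fst p - (1/2) * fst y - (1/2) * snd y,
                  - snd x - snd p + fst y - snd y)"

definition phi_map :: "real \<times> real \<Rightarrow> real \<times> real" where
  "phi_map x = (- (1/2) * fst x + snd x, - (1/2) * fst x - snd x)"

definition g_map :: "real \<times> real \<Rightarrow> (real \<times> real) \<times> (real \<times> real)
                      \<Rightarrow> (real \<times> real) \<times> ((real \<times> real) \<times> (real \<times> real))" where
  "g_map p \<xi> = (G_map p (fst \<xi>) (snd \<xi>), (phi_map (fst \<xi>), snd \<xi>))"

definition Gamma_map :: "real \<times> real \<Rightarrow> ((real \<times> real) \<times> (real \<times> real)) set" where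
  "Gamma_map p = {\<xi>. g_map p \<xi> \<in> C_set}"

text \<open>Robinson stability of the system g(p,xi) in C with solution map Gamma = {xi. g p xi in C},
  at (pbar, xibar), over the parameter set P.  The distance to the empty set is +infinity,
  hence for an empty Gamma(p) the inequality fails; this is encoded by requiring Gamma(p) nonempty.\<close>
definition robinson_stable ::
  "('p::metric_space) set \<Rightarrow> ('p \<Rightarrow> 'x::metric_space \<Rightarrow> 'z::metric_space) \<Rightarrow> 'z set \<Rightarrow> 'p \<Rightarrow> 'x \<Rightarrow> bool" where
  "robinson_stable P g C pbar xibar \<longleftrightarrow>
     (\<exists>\<kappa>\<ge>0. \<exists>V U. open V \<and> pbar \<in> V \<and> open U \<and> xibar \<in> U \<and>
        (\<forall>p\<in>P \<inter> V. \<forall>\<xi>\<in>U.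
           {\<eta>. g p \<eta> \<in> C} \<noteq> {} \<and>
           infdist \<xi> {\<eta>. g p \<eta> \<in> C} \<le> \<kappa> * infdist (g p \<xi>) C))"

definition lipschitz_like ::
  "('p::metric_space) set \<Rightarrow> ('p \<Rightarrow> 'x::metric_space set) \<Rightarrow> 'p \<Rightarrow> 'x \<Rightarrow> bool" where
  "lipschitz_like P S pbar xibar \<longleftrightarrow>
     (\<exists>L\<ge>0. \<exists>V U. open V \<and> pbar \<in> V \<and> open U \<and> xibar \<in> U \<and>
        (\<forall>p\<in>P \<inter> V. \<forall>p'\<in>P \<inter> V. \<forall>\<xi>\<in>S p \<inter> U.
           \<exists>\<xi>'\<in>S p'. dist \<xi> \<xi>' \<le> L * dist p p'))"

end

theory Submission imports Defs begin

definition sol :: "real \<Rightarrow> real \<Rightarrow> real \<Rightarrow> real \<Rightarrow> real \<Rightarrow> real \<Rightarrow> bool" where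
"sol p1 p2 x1 x2 y1 y2 \<longleftrightarrow> x1 - p1 - (1/2)*y1 - (1/2)*y2 = 0 \<and> - x2 - p2 + y1 - y2 = 0
  \<and> -(1/2)*x1 + x2 \<le> 0 \<and> -(1/2)*x1 - x2 \<le> 0 \<and> y1 \<ge> 0 \<and> y2 \<ge> 0
  \<and> (-(1/2)*x1 + x2) * y1 = 0 \<and> (-(1/2)*x1 - x2) * y2 = 0"

definition near :: "real \<Rightarrow> real \<Rightarrow> real \<Rightarrow> real \<Rightarrow> real \<Rightarrow> real \<Rightarrow> real \<Rightarrow> bool" where
"near p1 p2 a b c d K \<longleftrightarrow> (\<exists>x1 x2 y1 y2. sol p1 p2 x1 x2 y1 y2 \<and>
    \<bar>a - x1\<bar> + \<bar>b - x2\<bar> + \<bar>c - y1\<bar> + \<bar>d - y2\<bar> \<le> K)"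

lemma sol_B0: "p1 + 2*p2 \<ge> 0 \<Longrightarrow> p1 - 2*p2 \<ge> 0 \<Longrightarrow> sol p1 p2 p1 (-p2) 0 0"
  unfolding sol_def by auto

lemma sol_B1: "p1 + 2*p2 \<ge> 0 \<Longrightarrow> 2*p1 + p2 \<ge> 0 \<Longrightarrow>
   sol p1 p2 ((4/3)*p1+(2/3)*p2) ((2/3)*p1+(1/3)*p2) ((2/3)*p1+(4/3)*p2) 0"
  unfolding sol_def by (auto simp: field_simps)

lemma sol_B2: "p1 - 2*p2 \<ge> 0 \<Longrightarrow> 2*p1 - p2 \<ge> 0 \<Longrightarrow>
   sol p1 p2 ((4/3)*p1-(2/3)*p2) (-(2/3)*p1+(1/3)*p2) 0 ((2/3)*p1-(4/3)*p2)"
  unfolding sol_def by (auto simp: field_simps)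

lemma sol_B12: "-2*p1 + p2 \<ge> 0 \<Longrightarrow> -2*p1 - p2 \<ge> 0 \<Longrightarrow>
   sol p1 p2 0 0 (-p1+(1/2)*p2) (-p1-(1/2)*p2)"
  unfolding sol_def by (auto simp: field_simps)

lemma near_exact: "sol p1 p2 a b c d \<Longrightarrow> K \<ge> 0 \<Longrightarrow> near p1 p2 a b c d K"
  unfolding near_def by (rule exI[of _ a], rule exI[of _ b], rule exI[of _ c], rule exI[of _ d]) simp

lemma near_witness: "sol p1 p2 x1 x2 y1 y2 \<Longrightarrow> \<bar>a - x1\<bar> + \<bar>b - x2\<bar> + \<bar>c - y1\<bar> + \<bar>d - y2\<bar> \<le> K
   \<Longrightarrow> near p1 p2 a b c d K"
  unfolding near_def by blast

lemma fallback: "\<exists>x1 x2 y1 y2. sol p1 p2 x1 x2 y1 y2 \<and> \<bar>x1\<bar>+\<bar>x2\<bar>+\<bar>y1\<bar>+\<bar>y2\<bar> \<le> 4*\<bar>p1\<bar>+4*\<bar>p2\<bar>"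
proof -
  consider "p1 + 2*p2 \<ge> 0 \<and> p1 - 2*p2 \<ge> 0" | "p1 + 2*p2 \<ge> 0 \<and> 2*p1 + p2 \<ge> 0"
    | "p1 - 2*p2 \<ge> 0 \<and> 2*p1 - p2 \<ge> 0" | "-2*p1 + p2 \<ge> 0 \<and> -2*p1 - p2 \<ge> 0" by linarith
  then show ?thesis
  proof cases
    case 1
    have "sol p1 p2 p1 (-p2) 0 0" by (rule sol_B0) (use 1 in auto)
    moreover have "\<bar>p1\<bar>+\<bar>-p2\<bar>+\<bar>0\<bar>+\<bar>0\<bar> \<le> 4*\<bar>p1\<bar>+4*\<bar>p2\<bar>" by (simp add: abs_real_def; linarith)
    ultimately show ?thesis by blast
  next
    case 2
    have "sol p1 p2 ((4/3)*p1+(2/3)*p2) ((2/3)*p1+(1/3)*p2) ((2/3)*p1+(4/3)*p2) 0" by (rule sol_B1) (use 2 in auto)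
    moreover have "\<bar>(4/3)*p1+(2/3)*p2\<bar>+\<bar>(2/3)*p1+(1/3)*p2\<bar>+\<bar>(2/3)*p1+(4/3)*p2\<bar>+\<bar>0\<bar> \<le> 4*\<bar>p1\<bar>+4*\<bar>p2\<bar>"
      by (simp add: abs_real_def; linarith)
    ultimately show ?thesis by blast
  next
    case 3
    have "sol p1 p2 ((4/3)*p1-(2/3)*p2) (-(2/3)*p1+(1/3)*p2) 0 ((2/3)*p1-(4/3)*p2)" by (rule sol_B2) (use 3 in auto)
    moreover have "\<bar>(4/3)*p1-(2/3)*p2\<bar>+\<bar>-(2/3)*p1+(1/3)*p2\<bar>+\<bar>0\<bar>+\<bar>(2/3)*p1-(4/3)*p2\<bar> \<le> 4*\<bar>p1\<bar>+4*\<bar>p2\<bar>"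
      by (simp add: abs_real_def; linarith)
    ultimately show ?thesis by blast
  next
    case 4
    have "sol p1 p2 0 0 (-p1+(1/2)*p2) (-p1-(1/2)*p2)" by (rule sol_B12) (use 4 in auto)
    moreover have "\<bar>0\<bar>+\<bar>0\<bar>+\<bar>-p1+(1/2)*p2\<bar>+\<bar>-p1-(1/2)*p2\<bar> \<le> 4*\<bar>p1\<bar>+4*\<bar>p2::real\<bar>"
      by (simp add: abs_real_def; linarith)
    ultimately show ?thesis by blast
  qed
qed

lemma near_small:
  assumes "\<bar>p1\<bar> + \<bar>p2\<bar> \<le> E" "\<bar>a\<bar>+\<bar>b\<bar>+\<bar>c\<bar>+\<bar>d\<bar> \<le> 4*\<bar>p1\<bar>+4*\<bar>p2\<bar>"
  shows "near p1 p2 a b c d (8*E)"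
proof -
  obtain x1 x2 y1 y2 where s: "sol p1 p2 x1 x2 y1 y2" and b: "\<bar>x1\<bar>+\<bar>x2\<bar>+\<bar>y1\<bar>+\<bar>y2\<bar> \<le> 4*\<bar>p1\<bar>+4*\<bar>p2\<bar>"
    using fallback by blast
  have "\<bar>a - x1\<bar> + \<bar>b - x2\<bar> + \<bar>c - y1\<bar> + \<bar>d - y2\<bar> \<le> 8*E"
    using abs_triangle_ineq4[of a x1] abs_triangle_ineq4[of b x2] abs_triangle_ineq4[of c y1]
      abs_triangle_ineq4[of d y2] b assms by linarith
  then show ?thesis using near_witness[OF s] by blast
qed

lemma near_mono: "near p1 p2 a b c d K \<Longrightarrow> K \<le> K' \<Longrightarrow> near p1 p2 a b c d K'"
  unfolding near_def by force

lemma near_small':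
  assumes "\<bar>p1\<bar> + \<bar>p2\<bar> \<le> 12*Dw" "\<bar>a\<bar>+\<bar>b\<bar>+\<bar>c\<bar>+\<bar>d\<bar> \<le> 4*\<bar>p1\<bar>+4*\<bar>p2\<bar>"
  shows "near p1 p2 a b c d (100*Dw)"
proof -
  have "0 \<le> Dw" using assms(1) by linarith
  then show ?thesis using near_small[OF assms] near_mono by fastforce
qed

locale cone2 =
  fixes p1 p2 w Dw :: real
  assumes w0: "0 \<le> w" and wD: "w \<le> Dw"
    and Fp: "p1 > 0 \<Longrightarrow> -2*w \<le> 2*p2+p1 \<Longrightarrow> 2*p2+p1 \<le> 2*w \<Longrightarrow> p1 \<le> 2*Dw"
    and Fm: "p1 > 0 \<Longrightarrow> -2*w \<le> 2*p2-p1 \<Longrightarrow> 2*p2-p1 \<le> 2*w \<Longrightarrow> p1 \<le> 2*Dw"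
begin

lemma step2_B0:
  assumes c1: "p1 + 2*p2 \<ge> -w" and c2: "p1 - 2*p2 \<ge> -w"
  shows "near p1 p2 p1 (-p2) 0 0 (100*Dw)"
proof (cases "p1 + 2*p2 \<ge> 0 \<and> p1 - 2*p2 \<ge> 0")
  case True
  then show ?thesis using w0 wD by (intro near_exact sol_B0) auto
next
  case False
  have sm: "\<bar>p1\<bar> + \<bar>p2\<bar> \<le> 12*Dw"
  proof (cases "p1 > 0")
    case True
    have "p1 \<le> 2*Dw"
    proof (cases "p1 + 2*p2 < 0")
      case True
      show ?thesis by (rule Fp; use True \<open>p1 > 0\<close> c1 c2 w0 in linarith)
    next
      case F2: False
      show ?thesis by (rule Fm; use F2 False \<open>p1 > 0\<close> c1 c2 w0 in linarith)
    qed
    then show ?thesis using True c1 c2 w0 wD by (simp add: abs_real_def; linarith)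
  next
    case False
    then show ?thesis using c1 c2 w0 wD by (simp add: abs_real_def; linarith)
  qed
  have "\<bar>p1\<bar>+\<bar>-p2\<bar>+\<bar>0\<bar>+\<bar>0\<bar> \<le> 4*\<bar>p1\<bar>+4*\<bar>p2::real\<bar>" by (simp add: abs_real_def; linarith)
  then show ?thesis using near_small'[OF sm] by blast
qed

lemma step2_B1:
  assumes c1: "p1 + 2*p2 \<ge> -w" and c2: "2*p1 + p2 \<ge> -w"
  shows "near p1 p2 ((4/3)*p1+(2/3)*p2) ((2/3)*p1+(1/3)*p2) ((2/3)*p1+(4/3)*p2) 0 (100*Dw)"
proof -
  consider "p1 + 2*p2 \<ge> 0 \<and> 2*p1 + p2 \<ge> 0" | "2*p1+p2 < 0 \<and> p1+2*p2 \<ge> 0 \<and> 2*p1-p2 \<le> 0"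
    | "\<not> (p1 + 2*p2 \<ge> 0 \<and> 2*p1 + p2 \<ge> 0)" "\<not> (2*p1+p2 < 0 \<and> p1+2*p2 \<ge> 0 \<and> 2*p1-p2 \<le> 0)"
    by blast
  then show ?thesis
  proof cases
    case 1 then show ?thesis using w0 wD by (intro near_exact sol_B1) auto
  next
    case 2
    have s: "sol p1 p2 0 0 (-p1+(1/2)*p2) (-p1-(1/2)*p2)" by (rule sol_B12; use 2 in linarith)
    have "\<bar>((4/3)*p1+(2/3)*p2) - 0\<bar> + \<bar>((2/3)*p1+(1/3)*p2) - 0\<bar> + \<bar>((2/3)*p1+(4/3)*p2) - (-p1+(1/2)*p2)\<bar>
       + \<bar>0 - (-p1-(1/2)*p2)\<bar> \<le> 100*Dw"
      using 2 c1 c2 w0 wD by (simp add: abs_real_def; linarith)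
    then show ?thesis by (rule near_witness[OF s])
  next
    case 3
    have sm: "\<bar>p1\<bar> + \<bar>p2\<bar> \<le> 12*Dw"
    proof (cases "p1 > 0 \<and> p1 + 2*p2 < 0")
      case True
      have "p1 \<le> 2*Dw" by (rule Fp; use True c1 c2 w0 in linarith)
      then show ?thesis using True c1 c2 w0 wD by (simp add: abs_real_def; linarith)
    next
      case False
      then show ?thesis using 3 c1 c2 w0 wD by (simp add: abs_real_def; linarith)
    qed
    have "\<bar>(4/3)*p1+(2/3)*p2\<bar>+\<bar>(2/3)*p1+(1/3)*p2\<bar>+\<bar>(2/3)*p1+(4/3)*p2\<bar>+\<bar>0\<bar> \<le> 4*\<bar>p1\<bar>+4*\<bar>p2::real\<bar>"
      by (simp add: abs_real_def; linarith)
    then show ?thesis using near_small'[OF sm] by blast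
  qed
qed

lemma step2_B2:
  assumes c1: "p1 - 2*p2 \<ge> -w" and c2: "2*p1 - p2 \<ge> -w"
  shows "near p1 p2 ((4/3)*p1-(2/3)*p2) (-(2/3)*p1+(1/3)*p2) 0 ((2/3)*p1-(4/3)*p2) (100*Dw)"
proof -
  consider "p1 - 2*p2 \<ge> 0 \<and> 2*p1 - p2 \<ge> 0" | "2*p1-p2 < 0 \<and> p1-2*p2 \<ge> 0 \<and> 2*p1+p2 \<le> 0"
    | "\<not> (p1 - 2*p2 \<ge> 0 \<and> 2*p1 - p2 \<ge> 0)" "\<not> (2*p1-p2 < 0 \<and> p1-2*p2 \<ge> 0 \<and> 2*p1+p2 \<le> 0)"
    by blast
  then show ?thesis
  proof cases
    case 1 then show ?thesis using w0 wD by (intro near_exact sol_B2) auto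
  next
    case 2
    have s: "sol p1 p2 0 0 (-p1+(1/2)*p2) (-p1-(1/2)*p2)" by (rule sol_B12; use 2 in linarith)
    have "\<bar>((4/3)*p1-(2/3)*p2) - 0\<bar> + \<bar>(-(2/3)*p1+(1/3)*p2) - 0\<bar> + \<bar>0 - (-p1+(1/2)*p2)\<bar>
       + \<bar>((2/3)*p1-(4/3)*p2) - (-p1-(1/2)*p2)\<bar> \<le> 100*Dw"
      using 2 c1 c2 w0 wD by (simp add: abs_real_def; linarith)
    then show ?thesis by (rule near_witness[OF s])
  next
    case 3
    have sm: "\<bar>p1\<bar> + \<bar>p2\<bar> \<le> 12*Dw"
    proof (cases "p1 > 0 \<and> p1 - 2*p2 < 0")
      case True
      have "p1 \<le> 2*Dw" by (rule Fm; use True c1 c2 w0 in linarith)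
      then show ?thesis using True c1 c2 w0 wD by (simp add: abs_real_def; linarith)
    next
      case False
      then show ?thesis using 3 c1 c2 w0 wD by (simp add: abs_real_def; linarith)
    qed
    have "\<bar>(4/3)*p1-(2/3)*p2\<bar>+\<bar>-(2/3)*p1+(1/3)*p2\<bar>+\<bar>0\<bar>+\<bar>(2/3)*p1-(4/3)*p2\<bar> \<le> 4*\<bar>p1\<bar>+4*\<bar>p2::real\<bar>"
      by (simp add: abs_real_def; linarith)
    then show ?thesis using near_small'[OF sm] by blast
  qed
qed

lemma step2_B12:
  assumes c1: "-2*p1 + p2 \<ge> -w" and c2: "-2*p1 - p2 \<ge> -w"
  shows "near p1 p2 0 0 (-p1+(1/2)*p2) (-p1-(1/2)*p2) (100*Dw)"
proof -
  consider "-2*p1 + p2 \<ge> 0 \<and> -2*p1 - p2 \<ge> 0" | "-2*p1+p2 < 0 \<and> p1-2*p2 \<ge> 0"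
    | "-2*p1-p2 < 0 \<and> p1+2*p2 \<ge> 0"
    | "\<not> (-2*p1 + p2 \<ge> 0 \<and> -2*p1 - p2 \<ge> 0)" "\<not> (-2*p1+p2 < 0 \<and> p1-2*p2 \<ge> 0)"
      "\<not> (-2*p1-p2 < 0 \<and> p1+2*p2 \<ge> 0)"
    by blast
  then show ?thesis
  proof cases
    case 1 then show ?thesis using w0 wD by (intro near_exact sol_B12) auto
  next
    case 2
    have s: "sol p1 p2 ((4/3)*p1-(2/3)*p2) (-(2/3)*p1+(1/3)*p2) 0 ((2/3)*p1-(4/3)*p2)"
      by (rule sol_B2; use 2 in linarith)
    have "\<bar>0 - ((4/3)*p1-(2/3)*p2)\<bar> + \<bar>0 - (-(2/3)*p1+(1/3)*p2)\<bar> + \<bar>(-p1+(1/2)*p2) - 0\<bar>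
       + \<bar>(-p1-(1/2)*p2) - ((2/3)*p1-(4/3)*p2)\<bar> \<le> 100*Dw"
      using 2 c1 c2 w0 wD by (simp add: abs_real_def; linarith)
    then show ?thesis by (rule near_witness[OF s])
  next
    case 3
    have s: "sol p1 p2 ((4/3)*p1+(2/3)*p2) ((2/3)*p1+(1/3)*p2) ((2/3)*p1+(4/3)*p2) 0"
      by (rule sol_B1; use 3 in linarith)
    have "\<bar>0 - ((4/3)*p1+(2/3)*p2)\<bar> + \<bar>0 - ((2/3)*p1+(1/3)*p2)\<bar> + \<bar>(-p1+(1/2)*p2) - ((2/3)*p1+(4/3)*p2)\<bar>
       + \<bar>(-p1-(1/2)*p2) - 0\<bar> \<le> 100*Dw"
      using 3 c1 c2 w0 wD by (simp add: abs_real_def; linarith)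
    then show ?thesis by (rule near_witness[OF s])
  next
    case 4
    have sm: "\<bar>p1\<bar> + \<bar>p2\<bar> \<le> 12*Dw"
      using 4 c1 c2 w0 wD by (simp add: abs_real_def; linarith)
    have "\<bar>0\<bar>+\<bar>0\<bar>+\<bar>-p1+(1/2)*p2\<bar>+\<bar>-p1-(1/2)*p2\<bar> \<le> 4*\<bar>p1\<bar>+4*\<bar>p2::real\<bar>"
      by (simp add: abs_real_def; linarith)
    then show ?thesis using near_small'[OF sm] by blast
  qed
qed

end


lemma near_comb: "near p1 p2 a b c d K \<Longrightarrow> \<bar>x1 - a\<bar>+\<bar>x2 - b\<bar>+\<bar>y1 - c\<bar>+\<bar>y2 - d\<bar> \<le> L \<Longrightarrow>
   near p1 p2 x1 x2 y1 y2 (L + K)"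
  unfolding near_def
proof (elim exE conjE)
  fix z1 z2 z3 z4 assume s: "sol p1 p2 z1 z2 z3 z4" and
    k: "\<bar>a - z1\<bar> + \<bar>b - z2\<bar> + \<bar>c - z3\<bar> + \<bar>d - z4\<bar> \<le> K" and l: "\<bar>x1 - a\<bar>+\<bar>x2 - b\<bar>+\<bar>y1 - c\<bar>+\<bar>y2 - d\<bar> \<le> L"
  have "\<bar>x1 - z1\<bar> + \<bar>x2 - z2\<bar> + \<bar>y1 - z3\<bar> + \<bar>y2 - z4\<bar> \<le> L + K"
    using abs_triangle_ineq[of "x1 - a" "a - z1"] abs_triangle_ineq[of "x2 - b" "b - z2"]
      abs_triangle_ineq[of "y1 - c" "c - z3"] abs_triangle_ineq[of "y2 - d" "d - z4"] k l by simp
  then show "\<exists>x1' x2' y1' y2'. sol p1 p2 x1' x2' y1' y2' \<and>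
     \<bar>x1 - x1'\<bar> + \<bar>x2 - x2'\<bar> + \<bar>y1 - y1'\<bar> + \<bar>y2 - y2'\<bar> \<le> L + K" using s by blast
qed

lemma core:
  fixes p1 p2 x1 x2 y1 y2 a1 a2 v1 v2 N D :: real
  assumes r1: "\<bar>x1 - p1 - (1/2)*y1 - (1/2)*y2\<bar> \<le> N" and r2: "\<bar>-x2 - p2 + y1 - y2\<bar> \<le> N"
    and r3: "\<bar>-(1/2)*x1 + x2 - a1\<bar> \<le> N" and r4: "\<bar>-(1/2)*x1 - x2 - a2\<bar> \<le> N"
    and r5: "\<bar>y1 - v1\<bar> \<le> N" and r6: "\<bar>y2 - v2\<bar> \<le> N"
    and s: "a1 \<le> 0" "a2 \<le> 0" "v1 \<ge> 0" "v2 \<ge> 0"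
    and pat1: "a1 = 0 \<or> v1 = 0" and pat2: "a2 = 0 \<or> v2 = 0"
    and D: "D \<ge> 1"
    and conep: "p1 > 0 \<Longrightarrow> p1 \<le> D*\<bar>2*p2+p1\<bar>" and conem: "p1 > 0 \<Longrightarrow> p1 \<le> D*\<bar>2*p2-p1\<bar>"
  shows "near p1 p2 x1 x2 y1 y2 (1220*(D*N))"
proof -
  note R = r1[unfolded abs_le_iff] r2[unfolded abs_le_iff] r3[unfolded abs_le_iff]
    r4[unfolded abs_le_iff] r5[unfolded abs_le_iff] r6[unfolded abs_le_iff]
  have N0: "N \<ge> 0" using r1 by linarith
  define w where "w = 12*N"
  define Dw where "Dw = D*w"
  have w0: "w \<ge> 0" using N0 w_def by simp
  have wD: "w \<le> Dw" unfolding Dw_def using mult_right_mono[OF D w0] by simp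
  have c2: "cone2 p1 p2 w Dw"
  proof
    show "0 \<le> w" by (rule w0)
    show "w \<le> Dw" by (rule wD)
  next
    assume "p1 > 0" "-2*w \<le> 2*p2+p1" "2*p2+p1 \<le> 2*w"
    then have "\<bar>2*p2+p1\<bar> \<le> 2*w" by simp
    then have "D*\<bar>2*p2+p1\<bar> \<le> D*(2*w)" using D by (intro mult_left_mono) auto
    then show "p1 \<le> 2*Dw" using conep[OF \<open>p1 > 0\<close>] Dw_def by simp
  next
    assume "p1 > 0" "-2*w \<le> 2*p2-p1" "2*p2-p1 \<le> 2*w"
    then have "\<bar>2*p2-p1\<bar> \<le> 2*w" by simp
    then have "D*\<bar>2*p2-p1\<bar> \<le> D*(2*w)" using D by (intro mult_left_mono) auto
    then show "p1 \<le> 2*Dw" using conem[OF \<open>p1 > 0\<close>] Dw_def by simp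
  qed
  have DN: "N \<le> D*N" using mult_right_mono[OF D N0] by simp
  have fin: "20*N + 100*Dw \<le> 1220*(D*N)" using DN unfolding Dw_def w_def by simp
  have "near p1 p2 x1 x2 y1 y2 (20*N + 100*Dw)"
  proof -
    consider "v1 = 0" "v2 = 0" | "a1 = 0" "v2 = 0" | "v1 = 0" "a2 = 0" | "a1 = 0" "a2 = 0"
      using pat1 pat2 by blast
    then show ?thesis
    proof cases
      case 1
      have n: "near p1 p2 p1 (-p2) 0 0 (100*Dw)"
        by (rule cone2.step2_B0[OF c2]; use 1 R s w_def in linarith)
      have "\<bar>x1 - p1\<bar>+\<bar>x2 - -p2\<bar>+\<bar>y1 - 0\<bar>+\<bar>y2 - 0\<bar> \<le> 20*N"
        using 1 R s by (simp add: abs_real_def; linarith)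
      then show ?thesis by (rule near_comb[OF n])
    next
      case 2
      have n: "near p1 p2 ((4/3)*p1+(2/3)*p2) ((2/3)*p1+(1/3)*p2) ((2/3)*p1+(4/3)*p2) 0 (100*Dw)"
        by (rule cone2.step2_B1[OF c2]; use 2 R s w_def in linarith)
      have "\<bar>x1 - ((4/3)*p1+(2/3)*p2)\<bar>+\<bar>x2 - ((2/3)*p1+(1/3)*p2)\<bar>+\<bar>y1 - ((2/3)*p1+(4/3)*p2)\<bar>+\<bar>y2 - 0\<bar> \<le> 20*N"
        using 2 R s by (simp add: abs_real_def; linarith)
      then show ?thesis by (rule near_comb[OF n])
    next
      case 3
      have n: "near p1 p2 ((4/3)*p1-(2/3)*p2) (-(2/3)*p1+(1/3)*p2) 0 ((2/3)*p1-(4/3)*p2) (100*Dw)"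
        by (rule cone2.step2_B2[OF c2]; use 3 R s w_def in linarith)
      have "\<bar>x1 - ((4/3)*p1-(2/3)*p2)\<bar>+\<bar>x2 - (-(2/3)*p1+(1/3)*p2)\<bar>+\<bar>y1 - 0\<bar>+\<bar>y2 - ((2/3)*p1-(4/3)*p2)\<bar> \<le> 20*N"
        using 3 R s by (simp add: abs_real_def; linarith)
      then show ?thesis by (rule near_comb[OF n])
    next
      case 4
      have n: "near p1 p2 0 0 (-p1+(1/2)*p2) (-p1-(1/2)*p2) (100*Dw)"
        by (rule cone2.step2_B12[OF c2]; use 4 R s w_def in linarith)
      have "\<bar>x1 - 0\<bar>+\<bar>x2 - 0\<bar>+\<bar>y1 - (-p1+(1/2)*p2)\<bar>+\<bar>y2 - (-p1-(1/2)*p2)\<bar> \<le> 20*N"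
        using 4 R s by (simp add: abs_real_def; linarith)
      then show ?thesis by (rule near_comb[OF n])
    qed
  qed
  then show ?thesis using fin near_mono by blast
qed


lemma sol_Gamma: "sol p1 p2 x1 x2 y1 y2 \<Longrightarrow> ((x1,x2),(y1,y2)) \<in> Gamma_map (p1,p2)"
  unfolding Gamma_map_def g_map_def G_map_def phi_map_def C_set_def gph_N_orthant_def
  unfolding sol_def by (simp add: zero_prod_def)

lemma Gamma_ne: "Gamma_map p \<noteq> {}"
proof -
  obtain x1 x2 y1 y2 where "sol (fst p) (snd p) x1 x2 y1 y2" using fallback by blast
  from sol_Gamma[OF this] show ?thesis by auto
qed

lemma nfst: "norm (fst z) \<le> norm z" using norm_fst_le[of "fst z" "snd z"] by simp
lemma nsnd: "norm (snd z) \<le> norm z" by (metis norm_snd_le prod.collapse)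

lemma dist4: "dist ((x1::real,x2::real),(y1::real,y2::real)) ((x1',x2'),(y1',y2'))
   \<le> \<bar>x1 - x1'\<bar> + \<bar>x2 - x2'\<bar> + \<bar>y1 - y1'\<bar> + \<bar>y2 - y2'\<bar>"
proof -
  have "dist ((x1,x2),(y1,y2)) ((x1',x2'),(y1',y2')) = norm ((x1-x1',x2-x2'),(y1-y1',y2-y2'))"
    by (simp add: dist_norm)
  also have "\<dots> \<le> norm (x1-x1',x2-x2') + norm (y1-y1',y2-y2')" by (rule norm_Pair_le)
  also have "\<dots> \<le> (\<bar>x1 - x1'\<bar> + \<bar>x2 - x2'\<bar>) + (\<bar>y1 - y1'\<bar> + \<bar>y2 - y2'\<bar>)"
    using norm_Pair_le[of "x1-x1'" "x2-x2'"] norm_Pair_le[of "y1-y1'" "y2-y2'"] by simp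
  finally show ?thesis by simp
qed

lemma cone_dir:
  fixes P :: "(real \<times> real) set" and s :: real
  assumes "(1, s) \<notin> contingent_cone P 0"
  shows "\<exists>r>0. \<exists>\<delta>>0. \<forall>p\<in>P. 0 < fst p \<and> fst p < r \<longrightarrow> \<delta> * fst p \<le> \<bar>snd p - s * fst p\<bar>"
proof (rule ccontr)
  assume "\<not> ?thesis"
  then have H: "\<And>r \<delta>. r > 0 \<Longrightarrow> \<delta> > 0 \<Longrightarrow> \<exists>p\<in>P. 0 < fst p \<and> fst p < r \<and> \<bar>snd p - s * fst p\<bar> < \<delta> * fst p"
    by (meson not_le)
  define e :: "nat \<Rightarrow> real" where "e n = inverse (real (Suc n))" for n
  have e0: "e n > 0" for n unfolding e_def by simp
  define Pr where "Pr n q \<longleftrightarrow> q \<in> P \<and> 0 < fst q \<and> fst q < e n \<and> \<bar>snd q - s * fst q\<bar> < e n * fst q" for n q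
  have "\<exists>f. \<forall>n. Pr n (f n) \<and> fst (f (Suc n)) \<le> fst (f n)"
  proof (rule dependent_nat_choice)
    obtain q where "q \<in> P" "0 < fst q" "fst q < e 0" "\<bar>snd q - s * fst q\<bar> < e 0 * fst q"
      using H[OF e0[of 0] e0[of 0]] by blast
    then show "\<exists>x. Pr 0 x" unfolding Pr_def by blast
  next
    fix x n assume "Pr n x"
    then have "min (fst x) (e (Suc n)) > 0" using e0 unfolding Pr_def by simp
    from H[OF this e0[of "Suc n"]] obtain q where "q \<in> P" "0 < fst q" "fst q < min (fst x) (e (Suc n))"
      "\<bar>snd q - s * fst q\<bar> < e (Suc n) * fst q" by blast
    then show "\<exists>y. Pr (Suc n) y \<and> fst y \<le> fst x" unfolding Pr_def by (intro exI[of _ q]) auto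
  qed
  then obtain f where f: "\<And>n. Pr n (f n)" "\<And>n. fst (f (Suc n)) \<le> fst (f n)" by blast
  define t where "t k = fst (f k)" for k
  define wk where "wk k = (1::real, snd (f k) / fst (f k))" for k
  have et: "e \<longlonglongrightarrow> 0" unfolding e_def by (rule LIMSEQ_inverse_real_of_nat)
  have tpos: "\<forall>k. t k > 0" using f(1) unfolding Pr_def t_def by auto
  have tdec: "decseq t" unfolding t_def by (rule decseq_SucI) (use f(2) in auto)
  have t0: "t \<longlonglongrightarrow> 0"
  proof (rule tendsto_sandwich[of "\<lambda>_. 0" t sequentially e])
    show "\<forall>\<^sub>F n in sequentially. 0 \<le> t n" using tpos by (simp add: less_imp_le)
    show "\<forall>\<^sub>F n in sequentially. t n \<le> e n" using f(1) unfolding Pr_def t_def by (simp add: less_imp_le)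
  qed (auto simp: et)
  have bnd: "\<bar>snd (f k) / fst (f k) - s\<bar> \<le> e k" for k
  proof -
    have p: "0 < fst (f k)" "\<bar>snd (f k) - s * fst (f k)\<bar> < e k * fst (f k)" using f(1)[of k] unfolding Pr_def by auto
    have "snd (f k) / fst (f k) - s = (snd (f k) - s * fst (f k)) / fst (f k)" using p(1) by (simp add: field_simps)
    then have "\<bar>snd (f k) / fst (f k) - s\<bar> = \<bar>snd (f k) - s * fst (f k)\<bar> / fst (f k)" using p(1) by simp
    also have "\<dots> \<le> e k" using p by (simp add: pos_divide_le_eq)
    finally show ?thesis .
  qed
  have w2: "(\<lambda>k. snd (f k) / fst (f k)) \<longlonglongrightarrow> s"
  proof (rule tendsto_sandwich[of "\<lambda>k. s - e k" _ sequentially "\<lambda>k. s + e k"])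
    show "\<forall>\<^sub>F n in sequentially. s - e n \<le> snd (f n) / fst (f n)" using bnd by (auto simp: abs_le_iff algebra_simps)
    show "\<forall>\<^sub>F n in sequentially. snd (f n) / fst (f n) \<le> s + e n" using bnd by (auto simp: abs_le_iff algebra_simps)
    show "(\<lambda>n. s - e n) \<longlonglongrightarrow> s" using tendsto_diff[OF tendsto_const et] by simp
    show "(\<lambda>n. s + e n) \<longlonglongrightarrow> s" using tendsto_add[OF tendsto_const et] by simp
  qed
  have wl: "wk \<longlonglongrightarrow> (1, s)" unfolding wk_def by (intro tendsto_Pair tendsto_const w2)
  have inP: "\<forall>k. 0 + t k *\<^sub>R wk k \<in> P"
  proof
    fix k
    have "0 < fst (f k)" "f k \<in> P" using f(1)[of k] unfolding Pr_def by auto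
    moreover have "t k *\<^sub>R wk k = f k" using \<open>0 < fst (f k)\<close> unfolding t_def wk_def
      by (simp add: prod_eq_iff)
    ultimately show "0 + t k *\<^sub>R wk k \<in> P" by simp
  qed
  have "(1, s) \<in> contingent_cone P 0" unfolding contingent_cone_def
    using tpos tdec t0 wl inP by blast
  with assms show False by simp
qed


lemma comps6:
  fixes z :: "(real \<times> real) \<times> ((real \<times> real) \<times> (real \<times> real))"
  assumes "z = ((a,b),((c,d),(e,f)))"
  shows "\<bar>a\<bar> \<le> norm z \<and> \<bar>b\<bar> \<le> norm z \<and> \<bar>c\<bar> \<le> norm z \<and> \<bar>d\<bar> \<le> norm z \<and> \<bar>e\<bar> \<le> norm z \<and> \<bar>f\<bar> \<le> norm z"
proof -
  have 1: "norm (a,b) \<le> norm z" "norm ((c,d),(e,f)) \<le> norm z"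
    using norm_fst_le[of "(a,b)" "((c,d),(e,f))"] norm_snd_le[of "((c,d),(e,f))" "(a,b)"] assms by auto
  have 2: "norm (c,d) \<le> norm ((c,d),(e,f))" "norm (e,f) \<le> norm ((c,d),(e,f))"
    using norm_fst_le[of "(c,d)" "(e,f)"] norm_snd_le[of "(e,f)" "(c,d)"] by auto
  have 3: "\<bar>a\<bar> \<le> norm (a,b)" "\<bar>b\<bar> \<le> norm (a,b)" "\<bar>c\<bar> \<le> norm (c,d)" "\<bar>d\<bar> \<le> norm (c,d)"
     "\<bar>e\<bar> \<le> norm (e,f)" "\<bar>f\<bar> \<le> norm (e,f)"
    using norm_fst_le[of a b] norm_snd_le[of b a] norm_fst_le[of c d] norm_snd_le[of d c]
      norm_fst_le[of e f] norm_snd_le[of f e] by auto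
  show ?thesis using 1 2 3 by linarith
qed

lemma rob_key:
  fixes D :: real and p :: "real \<times> real"
  assumes D: "D \<ge> 1"
    and cp: "fst p > 0 \<Longrightarrow> fst p \<le> D*\<bar>2 * snd p + fst p\<bar>"
    and cm: "fst p > 0 \<Longrightarrow> fst p \<le> D*\<bar>2 * snd p - fst p\<bar>"
    and c: "c \<in> C_set"
  shows "\<exists>\<eta>\<in>Gamma_map p. dist \<xi> \<eta> \<le> 1220*D * dist (g_map p \<xi>) c"
proof -
  obtain p1 p2 where p: "p = (p1,p2)" by force
  obtain x1 x2 y1 y2 where xi: "\<xi> = ((x1,x2),(y1,y2))" by (metis prod.collapse)
  obtain a1 a2 v1 v2 where cc: "c = (0,((a1,a2),(v1,v2)))" and s: "a1 \<le> 0" "a2 \<le> 0" "v1 \<ge> 0" "v2 \<ge> 0"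
    and m: "a1 * v1 = 0" "a2 * v2 = 0"
    using c unfolding C_set_def gph_N_orthant_def by auto
  define N where "N = dist (g_map p \<xi>) c"
  have z: "g_map p \<xi> - c = ((x1 - p1 - (1/2)*y1 - (1/2)*y2, -x2 - p2 + y1 - y2),
      ((-(1/2)*x1 + x2 - a1, -(1/2)*x1 - x2 - a2), (y1 - v1, y2 - v2)))"
    unfolding p xi cc g_map_def G_map_def phi_map_def by simp
  have R: "\<bar>x1 - p1 - (1/2)*y1 - (1/2)*y2\<bar> \<le> N" "\<bar>-x2 - p2 + y1 - y2\<bar> \<le> N"
    "\<bar>-(1/2)*x1 + x2 - a1\<bar> \<le> N" "\<bar>-(1/2)*x1 - x2 - a2\<bar> \<le> N" "\<bar>y1 - v1\<bar> \<le> N" "\<bar>y2 - v2\<bar> \<le> N"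
    using comps6[OF z] unfolding N_def dist_norm by auto
  have "near p1 p2 x1 x2 y1 y2 (1220*(D*N))"
    by (rule core[OF R s _ _ D]) (use m cp cm p in auto)
  then obtain x1' x2' y1' y2' where sl: "sol p1 p2 x1' x2' y1' y2'"
    and b: "\<bar>x1 - x1'\<bar> + \<bar>x2 - x2'\<bar> + \<bar>y1 - y1'\<bar> + \<bar>y2 - y2'\<bar> \<le> 1220*(D*N)"
    unfolding near_def by blast
  have "((x1',x2'),(y1',y2')) \<in> Gamma_map p" using sol_Gamma[OF sl] p by simp
  moreover have "dist \<xi> ((x1',x2'),(y1',y2')) \<le> 1220*D * dist (g_map p \<xi>) c"
    using dist4[of x1 x2 y1 y2 x1' x2' y1' y2'] b unfolding xi N_def by simp
  ultimately show ?thesis by blast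
qed

lemma div_helper: "(\<delta>::real) > 0 \<Longrightarrow> \<delta> * p \<le> A \<Longrightarrow> A \<ge> 0 \<Longrightarrow> 1/\<delta> \<le> D \<Longrightarrow> p \<le> D * A"
proof -
  assume a: "\<delta> > 0" "\<delta> * p \<le> A" "A \<ge> 0" "1/\<delta> \<le> D"
  have "p \<le> A / \<delta>" using a by (simp add: pos_le_divide_eq mult.commute)
  also have "\<dots> = (1/\<delta>) * A" by simp
  also have "\<dots> \<le> D * A" using a by (intro mult_right_mono) auto
  finally show ?thesis .
qed


theorem mainTheorem16:
  fixes P :: "(real \<times> real) set"
  assumes "0 \<in> P"
    and "(1, 1/2) \<notin> contingent_cone P 0"
    and "(1, -1/2) \<notin> contingent_cone P 0"
  shows "robinson_stable P g_map C_set 0 ((0, 0), (0, 0))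
         \<and> lipschitz_like P Gamma_map 0 ((0, 0), (0, 0))"
proof -
  obtain r1 \<delta>1 where r1: "r1 > 0" "\<delta>1 > 0"
    and H1: "\<forall>p\<in>P. 0 < fst p \<and> fst p < r1 \<longrightarrow> \<delta>1 * fst p \<le> \<bar>snd p - (1/2) * fst p\<bar>"
    using cone_dir[OF assms(2)] by blast
  obtain r2 \<delta>2 where r2: "r2 > 0" "\<delta>2 > 0"
    and H2: "\<forall>p\<in>P. 0 < fst p \<and> fst p < r2 \<longrightarrow> \<delta>2 * fst p \<le> \<bar>snd p - (-1/2) * fst p\<bar>"
    using cone_dir[OF assms(3)] by blast
  define r where "r = min r1 r2"
  define D where "D = max 1 (max (1/\<delta>1) (1/\<delta>2))"
  define \<kappa> where "\<kappa> = 1220 * D"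
  have r0: "r > 0" using r1 r2 r_def by simp
  have D1: "D \<ge> 1" unfolding D_def by simp
  have kpos: "\<kappa> > 0" unfolding \<kappa>_def using D1 by simp
  have key: "\<exists>\<eta>\<in>Gamma_map p. dist \<xi> \<eta> \<le> \<kappa> * dist (g_map p \<xi>) c"
    if p: "p \<in> P" "p \<in> ball 0 r" and c: "c \<in> C_set" for p \<xi> c
  proof -
    have "\<bar>fst p\<bar> < r" using p(2) nfst[of p] by (simp add: dist_norm)
    then have lt: "fst p < r1" "fst p < r2" unfolding r_def by auto
    have cp: "fst p \<le> D*\<bar>2 * snd p + fst p\<bar>" if "fst p > 0"
    proof -
      have "\<delta>2 * fst p \<le> \<bar>snd p - (-1/2) * fst p\<bar>" using H2 p(1) that lt by blast
      also have "\<dots> \<le> \<bar>2 * snd p + fst p\<bar>" by (simp add: abs_real_def; linarith)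
      finally show ?thesis by (rule div_helper[OF r2(2)]) (auto simp: D_def)
    qed
    have cm: "fst p \<le> D*\<bar>2 * snd p - fst p\<bar>" if "fst p > 0"
    proof -
      have "\<delta>1 * fst p \<le> \<bar>snd p - (1/2) * fst p\<bar>" using H1 p(1) that lt by blast
      also have "\<dots> \<le> \<bar>2 * snd p - fst p\<bar>" by (simp add: abs_real_def; linarith)
      finally show ?thesis by (rule div_helper[OF r1(2)]) (auto simp: D_def)
    qed
    show ?thesis using rob_key[OF D1 cp cm c, of \<xi>] unfolding \<kappa>_def by simp
  qed
  have Cne: "C_set \<noteq> {}"
  proof -
    have "(0, ((0,0),(0,0))) \<in> C_set" unfolding C_set_def gph_N_orthant_def by simp
    then show ?thesis by blast
  qed
  have infd: "infdist \<xi> (Gamma_map p) \<le> \<kappa> * infdist (g_map p \<xi>) C_set"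
    if p: "p \<in> P" "p \<in> ball 0 r" for p \<xi>
  proof -
    have "infdist \<xi> (Gamma_map p) / \<kappa> \<le> dist (g_map p \<xi>) c" if c: "c \<in> C_set" for c
    proof -
      obtain \<eta> where "\<eta> \<in> Gamma_map p" "dist \<xi> \<eta> \<le> \<kappa> * dist (g_map p \<xi>) c"
        using key[OF p c] by blast
      then have "infdist \<xi> (Gamma_map p) \<le> \<kappa> * dist (g_map p \<xi>) c"
        using infdist_le2 by blast
      then show ?thesis using kpos by (simp add: pos_divide_le_eq mult.commute)
    qed
    then have "infdist \<xi> (Gamma_map p) / \<kappa> \<le> infdist (g_map p \<xi>) C_set"
      unfolding infdist_notempty[OF Cne] by (intro cINF_greatest Cne) auto
    then show ?thesis using kpos by (simp add: pos_divide_le_eq mult.commute)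
  qed
  have G_eq: "{\<eta>. g_map p \<eta> \<in> C_set} = Gamma_map p" for p unfolding Gamma_map_def by simp
  have rob: "robinson_stable P g_map C_set 0 ((0, 0), (0, 0))"
  proof -
    have A: "\<forall>p\<in>P \<inter> ball 0 r. \<forall>\<xi>\<in>(UNIV :: ((real \<times> real) \<times> (real \<times> real)) set).
        {\<eta>. g_map p \<eta> \<in> C_set} \<noteq> {} \<and>
        infdist \<xi> {\<eta>. g_map p \<eta> \<in> C_set} \<le> \<kappa> * infdist (g_map p \<xi>) C_set"
      unfolding G_eq using Gamma_ne infd by blast
    have B: "open (ball (0::real\<times>real) r)" "(0::real\<times>real) \<in> ball 0 r" using r0 by auto
    have k0: "\<kappa> \<ge> 0" using kpos by simp
    show ?thesis unfolding robinson_stable_def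
      apply (rule exI[where x=\<kappa>], rule conjI[OF k0])
      apply (rule exI[where x="ball 0 r"], rule exI[where x=UNIV])
      using A B by simp
  qed
  have lipA: "\<forall>p\<in>P \<inter> ball 0 r. \<forall>p'\<in>P \<inter> ball 0 r. \<forall>\<xi>\<in>Gamma_map p \<inter> UNIV.
           \<exists>\<xi>'\<in>Gamma_map p'. dist \<xi> \<xi>' \<le> (2*\<kappa>) * dist p p'"
  proof (intro ballI)
    fix p p' \<xi> assume p: "p \<in> P \<inter> ball 0 r" and p': "p' \<in> P \<inter> ball 0 r"
      and xi: "\<xi> \<in> Gamma_map p \<inter> UNIV"
    show "\<exists>\<xi>'\<in>Gamma_map p'. dist \<xi> \<xi>' \<le> 2*\<kappa> * dist p p'"
    proof (cases "p = p'")
      case True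
      then show ?thesis using xi by (intro bexI[of _ \<xi>]) auto
    next
      case False
      define d where "d = dist p p'"
      have d0: "d > 0" using False d_def by simp
      have gin: "g_map p \<xi> \<in> C_set" using xi unfolding Gamma_map_def by simp
      have diff: "g_map p' \<xi> - g_map p \<xi> = (p - p', 0)"
        by (simp add: g_map_def G_map_def prod_eq_iff)
      have "dist (g_map p' \<xi>) (g_map p \<xi>) = d"
        unfolding dist_norm diff d_def by (simp add: norm_Pair)
      then have "infdist (g_map p' \<xi>) C_set \<le> d" using infdist_le[OF gin, of "g_map p' \<xi>"] by simp
      then have "\<kappa> * infdist (g_map p' \<xi>) C_set \<le> \<kappa> * d" using kpos by (intro mult_left_mono) auto
      then have "infdist \<xi> (Gamma_map p') \<le> \<kappa> * d"
        using infd[of p' \<xi>] p' by auto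
      also have "\<dots> < 2*\<kappa>*d" using kpos d0 by simp
      finally have lt: "infdist \<xi> (Gamma_map p') < 2*\<kappa>*d" .
      show ?thesis
      proof (rule ccontr)
        assume "\<not> ?thesis"
        then have "\<forall>\<eta>\<in>Gamma_map p'. 2*\<kappa>*d \<le> dist \<xi> \<eta>" unfolding d_def by auto
        then have "2*\<kappa>*d \<le> infdist \<xi> (Gamma_map p')"
          unfolding infdist_notempty[OF Gamma_ne] by (intro cINF_greatest Gamma_ne) auto
        with lt show False by simp
      qed
    qed
  qed
  have lip: "lipschitz_like P Gamma_map 0 ((0, 0), (0, 0))"
  proof -
    have B: "open (ball (0::real\<times>real) r)" "(0::real\<times>real) \<in> ball 0 r" using r0 by auto
    have k0: "2*\<kappa> \<ge> 0" using kpos by simp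
    show ?thesis unfolding lipschitz_like_def
      apply (rule exI[where x="2*\<kappa>"], rule conjI[OF k0])
      apply (rule exI[where x="ball 0 r"], rule exI[where x=UNIV])
      using lipA B by simp
  qed
  show ?thesis using rob lip by simp
qed

end
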